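(* Let $R$ be a commutative strongly purified ring. Then $R$ is a purified ring, and every pure ideal of $R$ is a regular ideal.
   Context: A regular ideal is an ideal generated by a set of idempotents. $R$ is strongly purified if for each $f\in R$ there is $n\geq1$ such that $\operatorname{Ann}(f^n)$ is a regular ideal. $R$ is purified if for any distinct minimal prime ideals $\mathfrak p,\mathfrak q$ of $R$ there is an idempotent $e\in\mathfrak p$ with $1-e\in\mathfrak q$. An ideal $I$ is pure if for each $f\in I$ there is $g\in I$ with $f(1-g)=0$. *)

theory Defs
  imports "HOL-Algebra.Algebra"
begin

definition idempotents :: "('a, 'b) ring_scheme \<Rightarrow> 'a set" where
  "idempotents R = {e \<in> carrier R. e \<otimes>\<^bsub>R\<^esub> e = e}"

definition regular_ideal :: "('a, 'b) ring_scheme \<Rightarrow> 'a set \<Rightarrow> bool" where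
  "regular_ideal R I \<longleftrightarrow> (\<exists>E. E \<subseteq> idempotents R \<and> I = genideal R E)"

definition Ann :: "('a, 'b) ring_scheme \<Rightarrow> 'a \<Rightarrow> 'a set" where
  "Ann R f = {x \<in> carrier R. x \<otimes>\<^bsub>R\<^esub> f = \<zero>\<^bsub>R\<^esub>}"

definition strongly_purified :: "('a, 'b) ring_scheme \<Rightarrow> bool" where
  "strongly_purified R \<longleftrightarrow>
     (\<forall>f \<in> carrier R. \<exists>n::nat. n \<ge> 1 \<and> regular_ideal R (Ann R (f [^]\<^bsub>R\<^esub> n)))"

definition minimal_prime :: "('a, 'b) ring_scheme \<Rightarrow> 'a set \<Rightarrow> bool" where
  "minimal_prime R P \<longleftrightarrow> primeideal P R \<and> (\<forall>Q. primeideal Q R \<and> Q \<subseteq> P \<longrightarrow> Q = P)"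

definition purified :: "('a, 'b) ring_scheme \<Rightarrow> bool" where
  "purified R \<longleftrightarrow>
     (\<forall>p q. minimal_prime R p \<and> minimal_prime R q \<and> p \<noteq> q \<longrightarrow>
        (\<exists>e \<in> p. e \<in> idempotents R \<and> \<one>\<^bsub>R\<^esub> \<ominus>\<^bsub>R\<^esub> e \<in> q))"

definition pure_ideal :: "('a, 'b) ring_scheme \<Rightarrow> 'a set \<Rightarrow> bool" where
  "pure_ideal R I \<longleftrightarrow> ideal I R \<and>
     (\<forall>f \<in> I. \<exists>g \<in> I. f \<otimes>\<^bsub>R\<^esub> (\<one>\<^bsub>R\<^esub> \<ominus>\<^bsub>R\<^esub> g) = \<zero>\<^bsub>R\<^esub>)"

end

theory Submission
  imports Defs
begin

lemma (in cring) colon_ideal: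
  assumes M: "ideal M R" and b: "b \<in> carrier R"
  shows "ideal {x \<in> carrier R. x \<otimes> b \<in> M} R"
proof (rule idealI)
  show "ring R" by (rule ring_axioms)
  interpret M: ideal M R by (rule M)
  show "subgroup {x \<in> carrier R. x \<otimes> b \<in> M} (add_monoid R)"
  proof (rule add.subgroupI)
    show "{x \<in> carrier R. x \<otimes> b \<in> M} \<subseteq> carrier R" by auto
    show "{x \<in> carrier R. x \<otimes> b \<in> M} \<noteq> {}" proof -
      have "\<zero> \<in> {x \<in> carrier R. x \<otimes> b \<in> M}" using b M.zero_closed by simp
      then show ?thesis by blast
    qed
    fix x y assume x: "x \<in> {x \<in> carrier R. x \<otimes> b \<in> M}" and y: "y \<in> {x \<in> carrier R. x \<otimes> b \<in> M}"
    have "(\<ominus> x) \<otimes> b = \<ominus> (x \<otimes> b)" using x b by (simp add: l_minus)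
    then show "\<ominus> x \<in> {x \<in> carrier R. x \<otimes> b \<in> M}"
      using x by auto
    have "(x \<oplus> y) \<otimes> b = x \<otimes> b \<oplus> y \<otimes> b" using x y b by (simp add: l_distr)
    then show "x \<oplus> y \<in> {x \<in> carrier R. x \<otimes> b \<in> M}"
      using x y by auto
  qed
  fix a x assume a: "a \<in> {x \<in> carrier R. x \<otimes> b \<in> M}" and x: "x \<in> carrier R"
  have "(x \<otimes> a) \<otimes> b = x \<otimes> (a \<otimes> b)" using a x b by (simp add: m_assoc)
  then show "x \<otimes> a \<in> {x \<in> carrier R. x \<otimes> b \<in> M}" using a x by (auto intro: M.I_l_closed)
  have "(a \<otimes> x) \<otimes> b = (a \<otimes> b) \<otimes> x" using a x b by (metis (no_types, lifting) mem_Collect_eq m_assoc m_comm)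
  then show "a \<otimes> x \<in> {x \<in> carrier R. x \<otimes> b \<in> M}" using a x by (auto intro: M.I_r_closed)
qed

lemma (in cring) prime_avoid:
  assumes Sc: "S \<subseteq> carrier R" and one: "\<one> \<in> S" and zero: "\<zero> \<notin> S"
    and mul: "\<And>a b. a \<in> S \<Longrightarrow> b \<in> S \<Longrightarrow> a \<otimes> b \<in> S"
  shows "\<exists>P. primeideal P R \<and> P \<inter> S = {}"
proof -
  define F where "F = {I. ideal I R \<and> I \<inter> S = {}}"
  have "\<exists>M\<in>F. \<forall>Y\<in>F. M \<subseteq> Y \<longrightarrow> Y = M"
  proof (rule subset_Zorn)
    fix C assume C: "subset.chain F C"
    show "\<exists>U\<in>F. \<forall>Y\<in>C. Y \<subseteq> U"
    proof (cases "C = {}")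
      case True
      have "{\<zero>} \<in> F" using zeroideal zero by (auto simp: F_def)
      then show ?thesis using True by blast
    next
      case False
      have "subset.chain {I. ideal I R} C" using C unfolding pred_on.chain_def F_def by auto
      then have "ideal (\<Union>C) R" using chain_Union_is_ideal[of C] False by simp
      moreover have "\<Union>C \<inter> S = {}" using C unfolding pred_on.chain_def F_def by auto
      ultimately show ?thesis unfolding F_def by blast
    qed
  qed
  then obtain M where MF: "M \<in> F" and Mmax: "\<And>Y. Y \<in> F \<Longrightarrow> M \<subseteq> Y \<Longrightarrow> Y = M" by blast
  have Mi: "ideal M R" and MS: "M \<inter> S = {}" using MF by (auto simp: F_def)
  interpret M: ideal M R by (rule Mi)
  have "primeideal M R"
  proof (rule primeidealI[OF Mi is_cring])
    show "carrier R \<noteq> M" using one MS by blast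
    fix a b assume a: "a \<in> carrier R" and b: "b \<in> carrier R" and ab: "a \<otimes> b \<in> M"
    show "a \<in> M \<or> b \<in> M"
    proof (rule ccontr)
      assume nab: "\<not> (a \<in> M \<or> b \<in> M)"
      define J where "J = {x \<in> carrier R. x \<otimes> b \<in> M}"
      have Ji: "ideal J R" unfolding J_def by (rule colon_ideal[OF Mi b])
      have MJ: "M \<subseteq> J" unfolding J_def using b M.I_r_closed by auto
      have "a \<in> J" using a ab unfolding J_def by auto
      then have "J \<noteq> M" using nab by blast
      then have "J \<notin> F" using Mmax MJ by blast
      then obtain s1 where s1: "s1 \<in> S" "s1 \<otimes> b \<in> M" using Ji unfolding F_def J_def by blast
      have s1c: "s1 \<in> carrier R" using s1 Sc by blast
      define K where "K = {x \<in> carrier R. x \<otimes> s1 \<in> M}"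
      have Ki: "ideal K R" unfolding K_def by (rule colon_ideal[OF Mi s1c])
      have MK: "M \<subseteq> K" unfolding K_def using s1c M.I_r_closed by auto
      have "b \<otimes> s1 = s1 \<otimes> b" using b s1c m_comm by blast
      then have "b \<in> K" using b s1 unfolding K_def by auto
      then have "K \<noteq> M" using nab by blast
      then have "K \<notin> F" using Mmax MK by blast
      then obtain s2 where s2: "s2 \<in> S" "s2 \<otimes> s1 \<in> M" using Ki unfolding F_def K_def by blast
      have "s2 \<otimes> s1 \<in> S" using mul s1 s2 by blast
      then show False using s2 MS by blast
    qed
  qed
  then show ?thesis using MS by blast
qed

lemma (in cring) prime_pow:
  assumes "primeideal P R" "f \<in> carrier R" "f [^] (n::nat) \<in> P" "n \<ge> 1"
  shows "f \<in> P"
  using assms(3,4)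
proof (induction n)
  case 0 then show ?case by simp
next
  case (Suc n)
  show ?case
  proof (cases "n = 0")
    case True then show ?thesis using Suc.prems assms(2) by simp
  next
    case False
    have "f [^] n \<otimes> f \<in> P" using Suc.prems by simp
    then have "f [^] n \<in> P \<or> f \<in> P" using primeideal.I_prime[OF assms(1)] assms(2) by simp
    then show ?thesis using Suc.IH False by auto
  qed
qed

lemma (in cring) minprime_zd:
  assumes p: "minimal_prime R p" and f: "f \<in> p"
  shows "\<exists>s\<in>carrier R - p. \<exists>m::nat. s \<otimes> f [^] m = \<zero>"
proof (rule ccontr)
  assume H: "\<not> ?thesis"
  have pp: "primeideal p R" using p by (simp add: minimal_prime_def)
  interpret p: primeideal p R by (rule pp)
  have fc: "f \<in> carrier R" using f p.Icarr by blast
  define S where "S = {s \<otimes> f [^] (k::nat) | s k. s \<in> carrier R - p}"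
  have Sc: "S \<subseteq> carrier R" unfolding S_def using fc by auto
  have one_np: "\<one> \<notin> p" using p.I_notcarr p.one_imp_carrier by blast
  have "\<one> \<otimes> f [^] (0::nat) \<in> S" unfolding S_def using one_np by blast
  then have one: "\<one> \<in> S" by simp
  have zero: "\<zero> \<notin> S"
  proof
    assume "\<zero> \<in> S"
    then obtain s k where "\<zero> = s \<otimes> f [^] (k::nat)" "s \<in> carrier R - p" unfolding S_def by blast
    then show False using H by metis
  qed
  have mul: "a \<otimes> b \<in> S" if ha: "a \<in> S" and hb: "b \<in> S" for a b
  proof -
    obtain s k where a: "a = s \<otimes> f [^] (k::nat)" "s \<in> carrier R - p" using ha unfolding S_def by blast
    obtain t l where b: "b = t \<otimes> f [^] (l::nat)" "t \<in> carrier R - p" using hb unfolding S_def by blast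
    have "s \<otimes> t \<notin> p" using a b p.I_prime by blast
    moreover have "a \<otimes> b = (s \<otimes> t) \<otimes> f [^] (k + l)"
      using a b fc by (simp add: nat_pow_mult[symmetric] m_ac)
    ultimately show ?thesis unfolding S_def using a b by blast
  qed
  obtain P where P: "primeideal P R" "P \<inter> S = {}" using prime_avoid[OF Sc one zero mul] by blast
  interpret P: primeideal P R by (rule P(1))
  have "P \<subseteq> p"
  proof
    fix x assume x: "x \<in> P"
    show "x \<in> p"
    proof (rule ccontr)
      assume "x \<notin> p"
      then have "x \<otimes> f [^] (0::nat) \<in> S" unfolding S_def using x P.Icarr by blast
      then show False using x P(2) P.Icarr by auto
    qed
  qed
  then have "P = p" using p P(1) by (simp add: minimal_prime_def)
  moreover have "\<one> \<otimes> f [^] (1::nat) \<in> S" unfolding S_def using one_np by blast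
  then have "f \<in> S" using fc by simp
  ultimately show False using f P(2) by blast
qed

lemma (in cring) one_minus_pow:
  assumes I: "ideal I R" and g: "g \<in> I"
  shows "\<one> \<ominus> (\<one> \<ominus> g) [^] (n::nat) \<in> I"
proof (induction n)
  interpret I: ideal I R by (rule I)
  have gc: "g \<in> carrier R" using g I.Icarr by blast
  case 0
  have "\<one> \<ominus> \<one> = \<zero>" by algebra
  then show ?case using I.zero_closed by (simp only: nat_pow_0)
  case (Suc n)
  define x where "x = (\<one> \<ominus> g) [^] n"
  have xc: "x \<in> carrier R" unfolding x_def using gc by simp
  have "\<one> \<ominus> (\<one> \<ominus> g) [^] Suc n = (\<one> \<ominus> x) \<oplus> x \<otimes> g"
    using xc gc unfolding x_def[symmetric] nat_pow_Suc by algebra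
  moreover have "x \<otimes> g \<in> I" using xc g I.I_l_closed by blast
  ultimately show ?case using Suc.IH unfolding x_def by (simp add: I.a_closed)
qed

lemma (in cring) pure_regular:
  assumes sp: "strongly_purified R" and I: "pure_ideal R I"
  shows "regular_ideal R I"
proof -
  have Ii: "ideal I R" using I by (simp add: pure_ideal_def)
  interpret I: ideal I R by (rule Ii)
  have idc: "idempotents R \<subseteq> carrier R" by (auto simp: idempotents_def)
  have "I = Idl (I \<inter> idempotents R)"
  proof
    show "Idl (I \<inter> idempotents R) \<subseteq> I" by (rule genideal_minimal[OF Ii]) blast
    show "I \<subseteq> Idl (I \<inter> idempotents R)"
    proof
      fix f assume f: "f \<in> I"
      then obtain g where g: "g \<in> I" "f \<otimes> (\<one> \<ominus> g) = \<zero>" using I by (auto simp: pure_ideal_def)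
      have fc: "f \<in> carrier R" using f I.Icarr by blast
      have gc: "g \<in> carrier R" using g I.Icarr by blast
      define h where "h = \<one> \<ominus> g"
      have hc: "h \<in> carrier R" unfolding h_def using gc by simp
      obtain n :: nat where n: "n \<ge> 1" "regular_ideal R (Ann R (h [^] n))"
        using sp hc by (auto simp: strongly_purified_def)
      obtain E where E: "E \<subseteq> idempotents R" "Ann R (h [^] n) = Idl E"
        using n(2) by (auto simp: regular_ideal_def)
      obtain k where k: "n = Suc k" using n(1) by (cases n) auto
      have "f \<otimes> h [^] n = f \<otimes> (h \<otimes> h [^] k)"
        by (simp only: k nat_pow_Suc2[OF hc])
      also have "\<dots> = (f \<otimes> h) \<otimes> h [^] k"
        using fc hc by (simp add: m_assoc)
      also have "\<dots> = \<zero>" using g(2) hc unfolding h_def[symmetric] by simp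
      finally have fA: "f \<in> Ann R (h [^] n)" using fc by (simp add: Ann_def)
      have AI: "Ann R (h [^] n) \<subseteq> I"
      proof
        fix x assume x: "x \<in> Ann R (h [^] n)"
        have xc: "x \<in> carrier R" and x0: "x \<otimes> h [^] n = \<zero>" using x by (auto simp: Ann_def)
        have hn: "h [^] n \<in> carrier R" using hc by simp
        have "x = x \<otimes> (\<one> \<ominus> h [^] n) \<oplus> x \<otimes> h [^] n" using xc hn by algebra
        then have "x = x \<otimes> (\<one> \<ominus> h [^] n)" using x0 xc hn by simp
        moreover have "\<one> \<ominus> h [^] n \<in> I" unfolding h_def by (rule one_minus_pow[OF Ii g(1)])
        ultimately show "x \<in> I" using xc I.I_l_closed by metis
      qed
      have "E \<subseteq> Idl E" using E(1) idc genideal_self by blast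
      then have "E \<subseteq> I \<inter> idempotents R" using E AI by blast
      moreover have "I \<inter> idempotents R \<subseteq> carrier R" using idc by blast
      ultimately have "Idl E \<subseteq> Idl (I \<inter> idempotents R)" by (intro subset_Idl_subset)
      then show "f \<in> Idl (I \<inter> idempotents R)" using fA E(2) by blast
    qed
  qed
  then show ?thesis unfolding regular_ideal_def by blast
qed

lemma (in cring) purified_of_sp:
  assumes sp: "strongly_purified R"
  shows "purified R"
  unfolding purified_def
proof (intro allI impI)
  fix p q assume pq: "minimal_prime R p \<and> minimal_prime R q \<and> p \<noteq> q"
  have pp: "primeideal p R" and qp: "primeideal q R" using pq by (auto simp: minimal_prime_def)
  interpret p: primeideal p R by (rule pp)
  interpret q: primeideal q R by (rule qp)
  have "\<not> p \<subseteq> q" using pq pp by (auto simp: minimal_prime_def)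
  then obtain f where f: "f \<in> p" "f \<notin> q" by blast
  have fc: "f \<in> carrier R" using f p.Icarr by blast
  obtain s m where s: "s \<in> carrier R" "s \<notin> p" "s \<otimes> f [^] (m::nat) = \<zero>"
    using minprime_zd[of p f] pq f by blast
  have fmc: "f [^] m \<in> carrier R" using fc by simp
  obtain k :: nat where k: "k \<ge> 1" "regular_ideal R (Ann R ((f [^] m) [^] k))"
    using sp fmc by (auto simp: strongly_purified_def)
  obtain E where E: "E \<subseteq> idempotents R" "Ann R ((f [^] m) [^] k) = Idl E"
    using k(2) by (auto simp: regular_ideal_def)
  have idc: "idempotents R \<subseteq> carrier R" by (auto simp: idempotents_def)
  obtain j where j: "k = Suc j" using k(1) by (cases k) auto
  have "s \<otimes> (f [^] m) [^] k = s \<otimes> (f [^] m \<otimes> (f [^] m) [^] j)"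
    by (simp only: j nat_pow_Suc2[OF fmc])
  also have "\<dots> = (s \<otimes> f [^] m) \<otimes> (f [^] m) [^] j"
    using s fmc by (intro m_assoc[symmetric]) simp_all
  also have "\<dots> = \<zero>" using s(3) fmc by simp
  finally have "s \<in> Ann R ((f [^] m) [^] k)" using s by (simp add: Ann_def)
  then have "s \<in> Idl E" using E by simp
  have "\<not> E \<subseteq> p"
  proof
    assume "E \<subseteq> p"
    then have "Idl E \<subseteq> p" by (rule genideal_minimal[OF p.is_ideal])
    then show False using \<open>s \<in> Idl E\<close> s(2) by blast
  qed
  then obtain e where e: "e \<in> E" "e \<notin> p" by blast
  have ec: "e \<in> carrier R" and ee: "e \<otimes> e = e" using e E idc by (auto simp: idempotents_def)
  have "E \<subseteq> Idl E" using E(1) idc genideal_self by blast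
  then have "e \<in> Ann R ((f [^] m) [^] k)" using e E by blast
  then have e0: "e \<otimes> (f [^] m) [^] k = \<zero>" by (simp add: Ann_def)
  have fmk: "(f [^] m) [^] k \<in> carrier R" using fmc by simp
  have eq: "e \<in> q"
  proof (rule ccontr)
    assume "e \<notin> q"
    moreover have "e \<otimes> (f [^] m) [^] k \<in> q" using e0 q.zero_closed by simp
    ultimately have "(f [^] m) [^] k \<in> q" using q.I_prime ec fmk by blast
    then have "f [^] m \<in> q" using prime_pow[OF qp fmc] k(1) by blast
    moreover have "m \<ge> 1"
    proof (rule ccontr)
      assume "\<not> m \<ge> 1"
      then have "m = 0" by simp
      then have "s = \<zero>" using s by simp
      then show False using s(2) p.zero_closed by simp
    qed
    ultimately have "f \<in> q" using prime_pow[OF qp fc] by blast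
    then show False using f by blast
  qed
  define e' where "e' = \<one> \<ominus> e"
  have e'c: "e' \<in> carrier R" unfolding e'_def using ec by simp
  have "e \<otimes> e' = e \<ominus> e \<otimes> e" unfolding e'_def using ec by algebra
  moreover have "e \<ominus> e = \<zero>" using ec by algebra
  ultimately have "e \<otimes> e' = \<zero>" using ee by simp
  then have "e' \<in> p" using p.I_prime[OF ec e'c] e p.zero_closed by auto
  moreover have "e' \<otimes> e' = e'"
  proof -
    have "e' \<otimes> e' = \<one> \<ominus> e \<ominus> e \<oplus> e \<otimes> e" unfolding e'_def using ec by algebra
    also have "\<dots> = e'" unfolding ee unfolding e'_def using ec by algebra
    finally show ?thesis .
  qed
  moreover have "\<one> \<ominus> e' = e" unfolding e'_def using ec by algebra
  ultimately show "\<exists>e\<in>p. e \<in> idempotents R \<and> \<one> \<ominus> e \<in> q"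
    using e'c eq by (auto simp: idempotents_def)
qed

theorem theorem5p10:
  fixes R (structure)
  assumes "cring R" and "strongly_purified R"
  shows "purified R \<and> (\<forall>I. pure_ideal R I \<longrightarrow> regular_ideal R I)"
proof -
  interpret cring R by fact
  show ?thesis using cring.purified_of_sp[OF assms] cring.pure_regular[OF assms] by blast
qed

end
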